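(* Let measurements be modeled by a Gaussian process on $\mathbb{R}^2$ with squared-exponential kernel $k(x,x')=\sigma_0^2\exp\!\left(-\frac{\|x-x'\|^2}{2l^2}\right)$ ($\sigma_0^2>0$, $l>0$) and i.i.d. additive Gaussian noise of variance $\omega^2>0$. Let $0<\Delta<\sigma_0^2$, let $r_{max}=l\sqrt{-\log\left(1-\frac{\Delta}{\sigma_0^2}\right)}$, and let $\alpha>1$. Given a disk of radius $\frac{1}{\alpha}r_{max}$ centered at $x_i$, taking $n_\alpha$ measurements at $x_i$ suffices to ensure $MSE(x)\le\Delta$ for all points $x$ inside the disk, whenever $$n_\alpha\ge\left\lceil\frac{\omega^2}{\sigma_0^2}\,\frac{1}{\left(1-\frac{\Delta}{\sigma_0^2}\right)^{\frac{1}{\alpha^2}-1}-1}\right\rceil.$$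
   Context: For measurement locations $X=(x_1,\dots,x_n)$ (repetitions allowed, meaning multiple measurements at one location), the GP posterior variance at $x$ is $\hat\sigma^2_{x|X}=k(x,x)-\mathbf{k}(x,X)\left[\mathbf{K}(X,X)+\omega^2\mathbf{I}\right]^{-1}\mathbf{k}(X,x)$, where $\mathbf{K}(X,X)$ has entries $k(x_p,x_q)$ and $\mathbf{k}(x,X)=(k(x,x_1),\dots,k(x,x_n))$. The MSE at $x$ is $MSE(x)=\hat\sigma^2_{x|X}$. *)

theory Defs
  imports "HOL-Analysis.Analysis"
begin

definition se_kernel :: "real \<Rightarrow> real \<Rightarrow> real^2 \<Rightarrow> real^2 \<Rightarrow> real" where
  "se_kernel sigma0sq l x x' = sigma0sq * exp (- ((norm (x - x')) ^ 2 / (2 * l ^ 2)))"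

text \<open>GP posterior variance at x given measurement locations X (indexed by a finite type,
  repetitions allowed) and noise variance omegasq:
  k(x,x) - k(x,X) [K(X,X) + omegasq I]^{-1} k(X,x).\<close>
definition gp_post_var ::
  "(real^2 \<Rightarrow> real^2 \<Rightarrow> real) \<Rightarrow> real \<Rightarrow> ('n::finite \<Rightarrow> real^2) \<Rightarrow> real^2 \<Rightarrow> real" where
  "gp_post_var k omegasq X x =
     k x x - (\<chi> j. k x (X j)) \<bullet>
       (matrix_inv ((\<chi> p q. k (X p) (X q)) + omegasq *\<^sub>R mat 1) *v (\<chi> j. k (X j) x))"

definition MSE ::
  "(real^2 \<Rightarrow> real^2 \<Rightarrow> real) \<Rightarrow> real \<Rightarrow> ('n::finite \<Rightarrow> real^2) \<Rightarrow> real^2 \<Rightarrow> real" where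
  "MSE k omegasq X x = gp_post_var k omegasq X x"

definition r_max :: "real \<Rightarrow> real \<Rightarrow> real \<Rightarrow> real" where
  "r_max sigma0sq l \<Delta> = l * sqrt (- ln (1 - \<Delta> / sigma0sq))"

end

theory Submission
  imports Defs
begin

lemma inv_uniq:
  fixes A N :: "real^'n^'n"
  assumes "A ** N = mat 1" "N ** A = mat 1"
  shows "matrix_inv A = N"
proof -
  have "\<exists>A'. A ** A' = mat 1 \<and> A' ** A = mat 1" using assms by blast
  then have h: "A ** matrix_inv A = mat 1 \<and> matrix_inv A ** A = mat 1"
    unfolding matrix_inv_def by (rule someI_ex)
  have "matrix_inv A = matrix_inv A ** (A ** N)" using assms by simp
  also have "... = (matrix_inv A ** A) ** N" by (simp add: matrix_mul_assoc)
  also have "... = N" using h by simp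
  finally show ?thesis .
qed

lemma sum_aux:
  fixes f :: "'n::finite \<Rightarrow> real"
  shows "(\<Sum>j\<in>UNIV. (if i = j then a else 0) * f j) = a * f i"
proof -
  have "(\<Sum>j\<in>UNIV. (if i = j then a else 0) * f j) = (\<Sum>j\<in>UNIV. if j = i then a * f j else 0)"
    by (rule sum.cong) auto
  then show ?thesis by simp
qed

lemma sum_aux2:
  fixes f :: "'n::finite \<Rightarrow> real"
  shows "(\<Sum>j\<in>UNIV. f j * (if j = k then a else 0)) = f k * a"
proof -
  have "(\<Sum>j\<in>UNIV. f j * (if j = k then a else 0)) = (\<Sum>j\<in>UNIV. if j = k then f j * a else 0)"
    by (rule sum.cong) auto
  then show ?thesis by simp
qed

lemma inv_explicit:
  fixes s w :: real
  assumes "w > 0" "s \<ge> 0"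
  defines "t \<equiv> s / (s * real CARD('n) + w)"
  shows "matrix_inv ((\<chi> p q. s) + w *\<^sub>R mat 1 :: real^'n::finite^'n) =
         (\<chi> i k. ((if i = k then 1 else 0) - t) / w)"
proof (rule inv_uniq)
  let ?M = "((\<chi> p q. s) + w *\<^sub>R mat 1 :: real^'n::finite^'n)"
  let ?N = "(\<chi> i k. ((if i = k then 1 else 0) - t) / w) :: real^'n^'n"
  have d: "s * real CARD('n) + w > 0" using assms by (simp add: add_nonneg_pos)
  have e: "s - t * (s * real CARD('n) + w) = 0" unfolding t_def using d by simp
  have M: "?M $ i $ j = s + (if i = j then w else 0)" for i j by (simp add: mat_def)
  have N: "?N $ i $ j = ((if i = j then 1 else 0) - t) / w" for i j by simp
  have entry1: "(\<Sum>j\<in>UNIV. ?M $ i $ j * ?N $ j $ k) = mat 1 $ i $ k" for i k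
  proof -
    have "(\<Sum>j\<in>UNIV. ?M $ i $ j * ?N $ j $ k) = (\<Sum>j\<in>UNIV. (s + (if i = j then w else 0)) * (((if j = k then 1 else 0) - t) / w))"
      by (simp only: M N)
    also have "... = (\<Sum>j\<in>UNIV. s * (((if j = k then 1 else 0) - t) / w)) + (\<Sum>j\<in>UNIV. (if i = j then w else 0) * (((if j = k then 1 else 0) - t) / w))"
      by (simp add: distrib_right sum.distrib add_divide_distrib)
    also have "... = s * (1 - real CARD('n) * t) / w + ((if i = k then 1 else 0) - t)"
      using assms(1) by (simp add: sum_aux sum_distrib_left[symmetric] sum_divide_distrib[symmetric] sum_subtractf)
    also have "... = (if i = k then 1 else 0) + (s - t * (s * real CARD('n) + w)) / w"
      using assms(1) by (simp add: field_simps)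
    also have "... = mat 1 $ i $ k" using e by (simp add: mat_def)
    finally show ?thesis .
  qed
  have entry2: "(\<Sum>j\<in>UNIV. ?N $ i $ j * ?M $ j $ k) = mat 1 $ i $ k" for i k
  proof -
    have "(\<Sum>j\<in>UNIV. ?N $ i $ j * ?M $ j $ k) = (\<Sum>j\<in>UNIV. (((if i = j then 1 else 0) - t) / w) * (s + (if j = k then w else 0)))"
      by (simp only: M N)
    also have "... = (\<Sum>j\<in>UNIV. (((if i = j then 1 else 0) - t) / w) * s) + (\<Sum>j\<in>UNIV. (((if i = j then 1 else 0) - t) / w) * (if j = k then w else 0))"
      by (simp add: distrib_left sum.distrib)
    also have "... = s * (1 - real CARD('n) * t) / w + ((if i = k then 1 else 0) - t)"
    proof -
      have A: "(\<Sum>j\<in>UNIV. (((if i = j then 1 else 0) - t) / w) * s) = (\<Sum>j\<in>UNIV. s * (((if j = i then 1 else 0) - t) / w))"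
        by (rule sum.cong) auto
      have A2: "(\<Sum>j\<in>UNIV. s * (((if j = i then 1 else 0) - t) / w)) = s * (1 - real CARD('n) * t) / w"
        using assms(1) by (simp add: sum_distrib_left[symmetric] sum_divide_distrib[symmetric] sum_subtractf)
      have B: "(\<Sum>j\<in>UNIV. (((if i = j then 1 else 0) - t) / w) * (if j = k then w else 0)) = ((if i = k then 1 else 0) - t)"
        using sum_aux2[of "\<lambda>j. ((if i = j then 1 else 0) - t) / w" k w] assms(1) by simp
      show ?thesis using A A2 B by simp
    qed
    also have "... = (if i = k then 1 else 0) + (s - t * (s * real CARD('n) + w)) / w"
      using assms(1) by (simp add: field_simps)
    also have "... = mat 1 $ i $ k" using e by (simp add: mat_def)
    finally show ?thesis .
  qed
  have pe1: "(?M ** ?N) $ i $ k = (\<Sum>j\<in>UNIV. ?M $ i $ j * ?N $ j $ k)" for i k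
    by (simp add: matrix_matrix_mult_def)
  show "?M ** ?N = mat 1"
    by (intro iffD2[OF vec_eq_iff] allI) (simp only: pe1 entry1)
  have pe2: "(?N ** ?M) $ i $ k = (\<Sum>j\<in>UNIV. ?N $ i $ j * ?M $ j $ k)" for i k
    by (simp add: matrix_matrix_mult_def)
  show "?N ** ?M = mat 1"
    by (intro iffD2[OF vec_eq_iff] allI) (simp only: pe2 entry2)
qed

theorem lemma3:
  fixes sigma0 l omega \<Delta> \<alpha> :: real and xi :: "real^2" and X :: "'n::finite \<Rightarrow> real^2"
  assumes "sigma0 > 0" and "l > 0" and "omega > 0"
    and "0 < \<Delta>" and "\<Delta> < sigma0^2" and "\<alpha> > 1"
    and "\<forall>j. X j = xi"
    and "int CARD('n) \<ge>
           ceiling (omega^2 / sigma0^2 *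
             (1 / ((1 - \<Delta> / sigma0^2) powr (1 / \<alpha>^2 - 1) - 1)))"
  shows "\<forall>x. dist x xi \<le> r_max (sigma0^2) l \<Delta> / \<alpha> \<longrightarrow>
           MSE (se_kernel (sigma0^2) l) (omega^2) X x \<le> \<Delta>"
proof (intro allI impI)
  fix x :: "real^2"
  assume dx: "dist x xi \<le> r_max (sigma0^2) l \<Delta> / \<alpha>"
  define s where "s = sigma0^2"
  define w where "w = omega^2"
  define n where "n = real CARD('n)"
  define t where "t = s / (s * n + w)"
  define d where "d = dist x xi"
  define E where "E = exp (- (d^2 / l^2))"
  define c where "c = s * exp (- (d^2 / (2 * l^2)))"
  define q where "q = 1 - \<Delta> / s"
  define \<beta> where "\<beta> = 1 / \<alpha>^2"
  have s0: "s > 0" unfolding s_def using assms(1) by simp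
  have w0: "w > 0" unfolding w_def using assms(3) by simp
  have n1: "n \<ge> 1" unfolding n_def using finite_UNIV_card_ge_0[where 'a='n] by simp
  have den: "s * n + w > 0" using s0 w0 n1 by (simp add: add_pos_pos)
  have q0: "q > 0" unfolding q_def using assms(5) s0 by (simp add: s_def field_simps)
  have q1: "q < 1" unfolding q_def using assms(4) s0 by simp
  have b0: "\<beta> > 0" unfolding \<beta>_def using assms(6) by simp
  have b1: "\<beta> < 1" unfolding \<beta>_def using assms(6) by (simp add: power_less_one_iff)
  have kx: "se_kernel s l x x = s" by (simp add: se_kernel_def)
  have KX: "(\<chi> p q. se_kernel s l (X p) (X q)) = (\<chi> p q. s)"
    using assms(7) by (simp add: se_kernel_def)
  have kv1: "(\<chi> j. se_kernel s l x (X j)) = (\<chi> j. c)"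
    using assms(7) by (simp add: se_kernel_def c_def d_def dist_norm)
  have kv2: "(\<chi> j. se_kernel s l (X j) x) = (\<chi> j. c)"
    using assms(7) by (simp add: se_kernel_def c_def d_def dist_norm norm_minus_commute)
  have Nv: "(\<chi> i k. ((if i = k then 1 else 0) - t) / w) *v (\<chi> j. c) = (\<chi> j. c / (s * n + w) :: real^'n)"
  proof -
    have "(\<Sum>j\<in>UNIV. ((if i = j then 1 else 0) - t) / w * c) = c / (s * n + w)" for i :: 'n
    proof -
      have "(\<Sum>j\<in>UNIV. ((if i = j then 1 else 0) - t) / w * c) = c * (\<Sum>j\<in>UNIV. ((if j = i then 1 else 0) - t)) / w"
        by (simp add: sum_distrib_left sum_divide_distrib mult.commute eq_commute)
      also have "... = c * (1 - n * t) / w" by (simp add: sum_subtractf n_def)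
      also have "... = c / (s * n + w)"
      proof -
        have "1 - n * t = w / (s * n + w)" unfolding t_def using den by (simp add: field_simps)
        then show ?thesis using w0 by simp
      qed
      finally show ?thesis .
    qed
    then show ?thesis by (simp add: vec_eq_iff matrix_vector_mult_def)
  qed
  have inner: "(\<chi> j. c) \<bullet> (\<chi> j. c / (s * n + w) :: real^'n) = n * c^2 / (s * n + w)"
    by (simp add: inner_vec_def n_def power2_eq_square)
  have mse: "MSE (se_kernel (sigma0^2) l) (omega^2) X x = s - n * c^2 / (s * n + w)"
    unfolding MSE_def gp_post_var_def s_def[symmetric] w_def[symmetric]
    using kx KX kv1 kv2 inv_explicit[OF w0 less_imp_le[OF s0], where 'n='n] Nv inner
    unfolding t_def n_def by simp
  have c2: "c^2 = s^2 * E"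
  proof -
    have "exp (- (d^2 / (2 * l^2)))^2 = E"
      unfolding E_def by (simp add: exp_double[symmetric] power2_eq_square[of "exp _"] exp_add[symmetric])
    then show ?thesis unfolding c_def by (simp add: power_mult_distrib)
  qed
  have d0: "d \<ge> 0" unfolding d_def by simp
  have rm: "r_max (sigma0^2) l \<Delta> = l * sqrt (- ln q)" unfolding r_max_def q_def s_def by simp
  have lnq: "- ln q > 0" using q0 q1 by simp
  have "d \<le> l * sqrt (- ln q) / \<alpha>" using dx rm unfolding d_def by simp
  then have "d^2 \<le> (l * sqrt (- ln q) / \<alpha>)^2" using d0 by (simp add: power_mono)
  also have "... = l^2 * (- ln q) * \<beta>" unfolding \<beta>_def using lnq by (simp add: power_divide power_mult_distrib)
  finally have "d^2 / l^2 \<le> - ln q * \<beta>" using assms(2) by (simp add: field_simps)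
  then have "\<beta> * ln q \<le> - (d^2 / l^2)" by (simp add: mult.commute)
  then have "exp (\<beta> * ln q) \<le> E" unfolding E_def by simp
  then have EP: "q powr \<beta> \<le> E" using q0 by (simp add: powr_def)
  define P where "P = q powr \<beta>"
  have P0: "P > 0" unfolding P_def using q0 by simp
  have Pq: "q powr (\<beta> - 1) = P / q" unfolding P_def using q0 by (simp add: powr_diff)
  have Pgt: "q powr (\<beta> - 1) > 1"
    using powr_less_mono'[OF q0 q1, of "\<beta> - 1" 0] b1 q0 by simp
  have "n \<ge> w / s * (1 / (q powr (\<beta> - 1) - 1))"
  proof -
    have "of_int (ceiling (w / s * (1 / (q powr (\<beta> - 1) - 1)))) \<le> n"
      using assms(8) unfolding n_def w_def s_def q_def \<beta>_def by linarith
    then show ?thesis by linarith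
  qed
  then have "n \<ge> w / s * (q / (P - q))" using Pq Pgt q0 by (simp add: field_simps)
  moreover have PQ: "P > q"
  proof -
    have "q * 1 < q * (q powr (\<beta> - 1))" by (rule mult_strict_left_mono[OF Pgt q0])
    then show ?thesis using Pq q0 by simp
  qed
  ultimately have "w * q / (s * (P - q)) \<le> n" by (simp add: field_simps)
  then have key: "n * s * (P - q) \<ge> w * q" using PQ s0 by (simp add: pos_divide_le_eq mult.commute mult.left_commute)
  have "s * q * (s * n + w) \<le> n * s^2 * P"
  proof -
    have k2: "q * w + n * q * s \<le> P * n * s" using key by (simp add: algebra_simps)
    have "s * (q * w + n * q * s) \<le> s * (P * n * s)" using k2 s0 by (intro mult_left_mono) auto
    then show ?thesis by (simp add: algebra_simps power2_eq_square)
  qed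
  also have "... \<le> n * s^2 * E" using EP n1 unfolding P_def by (simp add: mult_left_mono)
  finally have "s * q * (s * n + w) \<le> n * c^2" using c2 by (simp add: algebra_simps)
  then have "s * q \<le> n * c^2 / (s * n + w)" using den by (simp add: field_simps)
  moreover have "s * q = s - \<Delta>" unfolding q_def using s0 by (simp add: field_simps)
  ultimately show "MSE (se_kernel (sigma0^2) l) (omega^2) X x \<le> \<Delta>" using mse by linarith
qed

end
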